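(* Let $n\ge1$ and let $\Omega\subset\mathbb{C}^n$ be a convex domain that is Kobayashi hyperbolic. Then $\Omega$ is holomorphic homogeneous regular, i.e. $\hat\sigma_\Omega=\inf_{p\in\Omega}\sigma_\Omega(p)>0$.
   Context: For $q\in\mathbb{C}^n$ and $r>0$ let $\mathbb{B}^n(q;r)=\{z\in\mathbb{C}^n:\|z-q\|<r\}$ (Euclidean norm) and $\mathbb{B}^n=\mathbb{B}^n(0;1)$. For a complex manifold $\Omega$ of dimension $n$ and $p\in\Omega$, let $\mathcal{F}(p,\Omega)$ be the set of injective holomorphic maps $f:\Omega\to\mathbb{B}^n$ with $f(p)=0$. The squeezing function is $\sigma_\Omega(p)=\sup\{r>0:\ \mathbb{B}^n(0;r)\subset f(\Omega)\text{ for some }f\in\mathcal{F}(p,\Omega)\}$, and the squeezing constant is $\hat\sigma_\Omega=\inf_{p\in\Omega}\sigma_\Omega(p)$. $\Omega$ is called holomorphic homogeneous regular (HHR), equivalently uniformly squeezing, if $\hat\sigma_\Omega>0$. *)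

theory Defs
  imports "HOL-Analysis.Analysis"
begin

definition complex_linear_vec :: "(complex^'m \<Rightarrow> complex^'n) \<Rightarrow> bool" where
  "complex_linear_vec L \<longleftrightarrow> (\<forall>c v. L (c *s v) = c *s L v)"

definition holo_map :: "(complex^'m \<Rightarrow> complex^'n) \<Rightarrow> (complex^'m) set \<Rightarrow> bool" where
  "holo_map f U \<longleftrightarrow> (\<forall>x\<in>U. \<exists>L. (f has_derivative L) (at x) \<and> complex_linear_vec L)"

definition holo_disc :: "(complex \<Rightarrow> complex^'n) \<Rightarrow> (complex^'n) set \<Rightarrow> bool" where
  "holo_disc g \<Omega> \<longleftrightarrow> (\<forall>i. (\<lambda>z. g z $ i) holomorphic_on ball 0 1) \<and> g ` ball 0 1 \<subseteq> \<Omega>"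

definition poincare_dist :: "complex \<Rightarrow> complex \<Rightarrow> real" where
  "poincare_dist a b = artanh (cmod ((a - b) / (1 - cnj a * b)))"

definition kobayashi_chain ::
  "(complex^'n) set \<Rightarrow> complex^'n \<Rightarrow> complex^'n \<Rightarrow> ((complex \<Rightarrow> complex^'n) \<times> complex \<times> complex) list \<Rightarrow> bool" where
  "kobayashi_chain \<Omega> p q cs \<longleftrightarrow> cs \<noteq> [] \<and>
     (\<forall>(g,a,b)\<in>set cs. holo_disc g \<Omega> \<and> a \<in> ball 0 1 \<and> b \<in> ball 0 1) \<and>
     (case hd cs of (g,a,b) \<Rightarrow> g a = p) \<and>
     (case last cs of (g,a,b) \<Rightarrow> g b = q) \<and>
     (\<forall>j. Suc j < length cs \<longrightarrow>
        (case cs ! j of (g,a,b) \<Rightarrow> g b) = (case cs ! Suc j of (g,a,b) \<Rightarrow> g a))"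

definition kobayashi_pdist :: "(complex^'n) set \<Rightarrow> complex^'n \<Rightarrow> complex^'n \<Rightarrow> real" where
  "kobayashi_pdist \<Omega> p q =
     Inf {(\<Sum>(g,a,b)\<leftarrow>cs. poincare_dist a b) | cs. kobayashi_chain \<Omega> p q cs}"

definition kobayashi_hyperbolic :: "(complex^'n) set \<Rightarrow> bool" where
  "kobayashi_hyperbolic \<Omega> \<longleftrightarrow> (\<forall>p\<in>\<Omega>. \<forall>q\<in>\<Omega>. p \<noteq> q \<longrightarrow> kobayashi_pdist \<Omega> p q > 0)"

definition domain :: "(complex^'n) set \<Rightarrow> bool" where
  "domain \<Omega> \<longleftrightarrow> open \<Omega> \<and> connected \<Omega> \<and> \<Omega> \<noteq> {}"

definition squeeze_maps :: "complex^'n \<Rightarrow> (complex^'n) set \<Rightarrow> (complex^'n \<Rightarrow> complex^'n) set" where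
  "squeeze_maps p \<Omega> = {f. holo_map f \<Omega> \<and> inj_on f \<Omega> \<and> f ` \<Omega> \<subseteq> ball 0 1 \<and> f p = 0}"

definition squeezing_function :: "(complex^'n) set \<Rightarrow> complex^'n \<Rightarrow> real" where
  "squeezing_function \<Omega> p = Sup {r. r > 0 \<and> (\<exists>f\<in>squeeze_maps p \<Omega>. ball 0 r \<subseteq> f ` \<Omega>)}"

definition squeezing_constant :: "(complex^'n) set \<Rightarrow> real" where
  "squeezing_constant \<Omega> = Inf (squeezing_function \<Omega> ` \<Omega>)"

definition HHR :: "(complex^'n) set \<Rightarrow> bool" where
  "HHR \<Omega> \<longleftrightarrow> squeezing_constant \<Omega> > 0"

end

theory Submission
  imports Defs
begin


definition cl :: "complex^'n \<Rightarrow> complex^'n \<Rightarrow> complex" where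
  "cl c x = (\<Sum>i\<in>UNIV. c$i * x$i)"

lemma cl_add: "cl c (x + y) = cl c x + cl c y"
  by (simp add: cl_def distrib_left sum.distrib)
lemma cl_diff: "cl c (x - y) = cl c x - cl c y"
  by (simp add: cl_def right_diff_distrib sum_subtractf)
lemma cl_scale: "cl c (a *s x) = a * cl c x"
  by (simp add: cl_def sum_distrib_left algebra_simps)
lemma cl_zero[simp]: "cl c 0 = 0"
  by (simp add: cl_def)
lemma cl_sum: "cl c (sum f A) = (\<Sum>j\<in>A. cl c (f j))"
  by (simp add: cl_def sum_distrib_left sum.swap[of _ A])

lemma sup_trick:
  fixes \<alpha> :: complex
  assumes "\<And>l. cmod l < 1 \<Longrightarrow> Re (l * \<alpha>) < b"
  shows "cmod \<alpha> \<le> b"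
proof (rule ccontr)
  assume "\<not> cmod \<alpha> \<le> b"
  hence gt: "cmod \<alpha> > b" by simp
  have b0: "b > 0" using assms[of 0] by simp
  have a0: "cmod \<alpha> > 0" using gt b0 by linarith
  define l where "l = of_real (b / cmod \<alpha> ^ 2) * cnj \<alpha>"
  have "cmod l = \<bar>b / cmod \<alpha> ^ 2\<bar> * cmod \<alpha>" by (simp only: l_def norm_mult norm_of_real complex_mod_cnj)
  also have "\<dots> = b / cmod \<alpha>" using a0 b0 by (simp add: power2_eq_square)
  finally have "cmod l = b / cmod \<alpha>" .
  hence "cmod l < 1" using gt a0 by (simp add: divide_less_eq)
  moreover have "Re (l * \<alpha>) = b"
  proof -
    have "l * \<alpha> = of_real (b / cmod \<alpha> ^ 2) * (cnj \<alpha> * \<alpha>)" by (simp add: l_def)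
    also have "cnj \<alpha> * \<alpha> = of_real (cmod \<alpha> ^ 2)" by (metis complex_norm_square mult.commute)
    finally show ?thesis using a0 by simp
  qed
  ultimately show False using assms[of l] by simp
qed

lemma pseudo_lt1:
  assumes "cmod a < 1" "cmod b < 1"
  shows "cmod ((a - b) / (1 - cnj a * b)) < 1"
proof -
  have id: "cmod (1 - cnj a * b)^2 - cmod (a-b)^2 = (1 - cmod a^2)*(1 - cmod b^2)"
    unfolding cmod_power2 by (simp add: algebra_simps power2_eq_square)
  have "cmod a ^2 < 1" "cmod b^2 < 1" using assms by (simp_all add: power_less_one_iff abs_less_iff)
  hence "(1 - cmod a^2)*(1 - cmod b^2) > 0" by simp
  hence lt: "cmod (a-b)^2 < cmod (1 - cnj a * b)^2" using id by simp
  hence lt2: "cmod (a-b) < cmod (1 - cnj a * b)" using power2_less_imp_less by fastforce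
  hence "cmod (1 - cnj a * b) > 0" by (meson norm_ge_zero le_less_trans)
  thus ?thesis using lt2 by (simp add: norm_divide)
qed

lemma artanh_nonneg: "0 \<le> x \<Longrightarrow> x < 1 \<Longrightarrow> artanh (x::real) \<ge> 0"
  by (simp add: artanh_def)

lemma artanh_le: assumes "0 \<le> x" "x \<le> 1/2" shows "artanh (x::real) \<le> 2*x"
proof -
  have "ln ((1+x)/(1-x)) \<le> (1+x)/(1-x) - 1" using assms by (intro ln_le_minus_one) auto
  also have "\<dots> = 2*x/(1-x)" using assms by (simp add: field_simps)
  also have "\<dots> \<le> 4*x"
  proof -
    have "x*(x*2) \<le> x*1" using assms by (intro mult_left_mono) auto
    thus ?thesis using assms by (simp add: field_simps)
  qed
  finally show ?thesis by (simp add: artanh_def)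
qed

lemma poincare_nonneg: "cmod a < 1 \<Longrightarrow> cmod b < 1 \<Longrightarrow> poincare_dist a b \<ge> 0"
  unfolding poincare_dist_def using pseudo_lt1 artanh_nonneg by simp



lemma chain_sum_nonneg:
  assumes "kobayashi_chain \<Omega> p q cs"
  shows "(\<Sum>(g,a,b)\<leftarrow>cs. poincare_dist a b) \<ge> 0"
proof -
  have "\<forall>x\<in>set cs. case x of (g,a,b) \<Rightarrow> holo_disc g \<Omega> \<and> a \<in> ball 0 1 \<and> b \<in> ball 0 1"
    using assms unfolding kobayashi_chain_def by blast
  hence "\<forall>y\<in>set (map (\<lambda>(g,a,b). poincare_dist a b) cs). y \<ge> 0"
    by (auto intro!: poincare_nonneg)
  thus ?thesis by (metis sum_list_nonneg)
qed

lemma line_not_in: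
  fixes \<Omega> :: "(complex^'n) set"
  assumes hyp: "kobayashi_hyperbolic \<Omega>" and p: "p \<in> \<Omega>" and u: "u \<noteq> 0"
  shows "\<exists>l. p + l *s u \<notin> \<Omega>"
proof (rule ccontr)
  assume "\<not> ?thesis"
  hence all: "\<And>l. p + l *s u \<in> \<Omega>" by blast
  define q where "q = p + u"
  have q: "q \<in> \<Omega>" using all[of 1] by (simp add: q_def)
  have pq: "p \<noteq> q" using u by (simp add: q_def)
  have d: "kobayashi_pdist \<Omega> p q > 0" using hyp p q pq unfolding kobayashi_hyperbolic_def by blast
  define d where "d = kobayashi_pdist \<Omega> p q"
  define R :: real where "R = 2 + 4 / d"
  have R2: "R \<ge> 2" using d by (simp add: R_def d_def)
  have Rd: "2 / R < d"
  proof -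
    have "4/d < R" by (simp add: R_def)
    hence "4 < R * d" using d by (simp add: d_def divide_less_eq mult.commute)
    thus ?thesis using R2 by (simp add: divide_less_eq mult.commute)
  qed
  define g where "g = (\<lambda>z. p + (of_real R * z) *s u)"
  define cs where "cs = [(g, 0::complex, complex_of_real (1/R))]"
  have hd: "holo_disc g \<Omega>"
    unfolding holo_disc_def g_def using all by (auto intro!: holomorphic_intros)
  have ch: "kobayashi_chain \<Omega> p q cs"
    unfolding kobayashi_chain_def cs_def using hd R2
    by (auto simp: g_def q_def norm_divide)
  let ?S = "{(\<Sum>(g,a,b)\<leftarrow>cs. poincare_dist a b) | cs. kobayashi_chain \<Omega> p q cs}"
  have bdd: "bdd_below ?S"
    by (rule bdd_belowI[of _ 0]) (auto dest: chain_sum_nonneg)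
  have "(\<Sum>(g,a,b)\<leftarrow>cs. poincare_dist a b) \<in> ?S" using ch by blast
  hence "d \<le> (\<Sum>(g,a,b)\<leftarrow>cs. poincare_dist a b)"
    unfolding d_def kobayashi_pdist_def by (rule cInf_lower[OF _ bdd])
  also have "\<dots> = artanh (1/R)" using R2
    by (simp add: cs_def poincare_dist_def norm_divide)
  also have "\<dots> \<le> 2 * (1/R)" using R2 by (intro artanh_le) auto
  finally show False using Rd by simp
qed



lemma clin_linear:
  fixes T :: "complex^'n \<Rightarrow> complex^'m"
  assumes "\<And>x y. T (x + y) = T x + T y" "\<And>a x. T (a *s x) = a *s T x"
  shows "Vector_Spaces.linear (*s) (*s) T"
  unfolding Vector_Spaces.linear_iff by (simp add: assms vec.vector_space_axioms)

lemma clin_surj_inj: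
  fixes T :: "complex^'n \<Rightarrow> complex^'n"
  assumes "\<And>x y. T (x + y) = T x + T y" "\<And>a x. T (a *s x) = a *s T x" "surj T"
  shows "inj T"
  using vec.linear_surj_imp_inj[OF clin_linear[OF assms(1,2)] assms(3)] .

lemma enum_exists: "\<exists>e::nat \<Rightarrow> 'n::finite. bij_betw e {..<CARD('n)} UNIV"
  using ex_bij_betw_nat_finite[of "UNIV::'n set"] by (simp add: lessThan_atLeast0)

lemma kernel_nonzero:
  fixes c :: "nat \<Rightarrow> complex^'n"
  assumes m: "m < CARD('n)"
  shows "\<exists>u. u \<noteq> 0 \<and> (\<forall>k<m. cl (c k) u = 0)"
proof -
  obtain e :: "nat \<Rightarrow> 'n" where e: "bij_betw e {..<CARD('n)} UNIV" using enum_exists by blast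
  define g where "g = inv_into {..<CARD('n)} e"
  have ge: "g (e j) = j" if "j < CARD('n)" for j
    using e that unfolding g_def by (simp add: bij_betw_def inv_into_f_f)
  define T :: "complex^'n \<Rightarrow> complex^'n" where
    "T = (\<lambda>x. \<chi> i. if g i < m then cl (c (g i)) x else 0)"
  have add: "T (x + y) = T x + T y" for x y
    by (simp add: T_def vec_eq_iff cl_add)
  have sc: "T (a *s x) = a *s T x" for a x
    by (simp add: T_def vec_eq_iff cl_scale)
  have "\<not> inj T"
  proof
    assume "inj T"
    hence "surj T" using vec.linear_inj_imp_surj[OF clin_linear[OF add sc]] by blast
    then obtain x where "T x = axis (e m) 1" by (metis surjD)
    hence "T x $ e m = 1" by simp
    moreover have "T x $ e m = 0" using ge[OF m] by (simp add: T_def)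
    ultimately show False by simp
  qed
  then obtain x y where xy: "x \<noteq> y" "T x = T y" unfolding inj_def by blast
  define u where "u = x - y"
  have "u \<noteq> 0" using xy by (simp add: u_def)
  moreover have "cl (c k) u = 0" if "k < m" for k
  proof -
    have km: "k < CARD('n)" using that m by simp
    have "T x $ e k = T y $ e k" using xy by simp
    hence "cl (c k) x = cl (c k) y" using ge[OF km] that by (simp add: T_def)
    thus ?thesis by (simp add: u_def cl_diff)
  qed
  ultimately show ?thesis by blast
qed



lemma norm_smult_vec: "norm (l *s (x::complex^'n)) = cmod l * norm x"
  unfolding norm_vec_def by (simp add: norm_mult L2_set_right_distrib)

lemma cl_scale_left: "cl (k *s c) x = k * cl c x"
  by (simp add: cl_def sum_distrib_left algebra_simps)

lemma continuous_cl: "continuous_on UNIV (cl c)"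
  unfolding cl_def by (intro continuous_intros)

lemma Re_cl_inner: "Re (cl (\<chi> i. cnj (a$i)) x) = inner a x"
  by (simp add: cl_def inner_vec_def inner_complex_def Re_sum)

lemma step:
  fixes \<Omega> :: "(complex^'n) set" and c :: "nat \<Rightarrow> complex^'n"
  assumes op: "open \<Omega>" and cv: "convex \<Omega>" and hyp: "kobayashi_hyperbolic \<Omega>" and p: "p \<in> \<Omega>"
    and u: "u \<noteq> 0" "\<forall>k<m. cl (c k) u = 0"
  shows "\<exists>v a. (\<forall>l. cmod l < 1 \<longrightarrow> p + l *s v \<in> \<Omega>) \<and> (\<forall>z\<in>\<Omega>. Re (cl a (z - p)) < 1)
              \<and> cl a v = 1 \<and> (\<forall>k<m. cl (c k) v = 0)"
proof -
  define W where "W = {x. \<forall>k<m. cl (c k) x = 0}"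
  have Wsc: "l *s x \<in> W" if "x \<in> W" for l x using that by (simp add: W_def cl_scale)
  have clW: "closed W"
  proof -
    have "W = (\<Inter>k\<in>{..<m}. cl (c k) -` {0})" by (auto simp: W_def)
    moreover have "closed (cl (c k) -` {0})" for k
      using continuous_closed_vimage[of "{0}" "cl (c k)"] continuous_cl[of "c k"]
      by (simp add: continuous_on_eq_continuous_at)
    ultimately show ?thesis by auto
  qed
  define Z where "Z = W \<inter> ((+) (-p) ` (- \<Omega>))"
  have clZ: "closed Z" unfolding Z_def using clW op by (intro closed_Int closed_translation) auto
  have Zi: "x \<in> Z \<longleftrightarrow> x \<in> W \<and> p + x \<notin> \<Omega>" for x
  proof -
    have "x \<in> (+) (-p) ` (- \<Omega>) \<longleftrightarrow> p + x \<notin> \<Omega>"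
    proof
      assume "x \<in> (+) (-p) ` (- \<Omega>)"
      then obtain y where "y \<notin> \<Omega>" "x = -p + y" by auto
      thus "p + x \<notin> \<Omega>" by simp
    next
      assume "p + x \<notin> \<Omega>"
      moreover have "x = -p + (p + x)" by simp
      ultimately show "x \<in> (+) (-p) ` (- \<Omega>)" by (intro rev_image_eqI[of "p + x"]) auto
    qed
    thus ?thesis by (simp add: Z_def)
  qed
  obtain l0 where l0: "p + l0 *s u \<notin> \<Omega>" using line_not_in[OF hyp p u(1)] by blast
  have "l0 *s u \<in> Z" using l0 u(2) by (simp add: Zi W_def cl_scale)
  hence "Z \<noteq> {}" by blast
  then obtain v where vZ: "v \<in> Z" and vmin: "\<And>y. y \<in> Z \<Longrightarrow> dist 0 v \<le> dist 0 y"
    using distance_attains_inf[OF clZ] by metis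
  have vW: "v \<in> W" and pv: "p + v \<notin> \<Omega>" using vZ by (auto simp: Zi)
  have v0: "v \<noteq> 0" using pv p by auto
  have D: "p + l *s v \<in> \<Omega>" if "cmod l < 1" for l
  proof (rule ccontr)
    assume "p + l *s v \<notin> \<Omega>"
    hence "l *s v \<in> Z" using Wsc[OF vW] by (simp add: Zi)
    hence "norm v \<le> cmod l * norm v" using vmin[of "l *s v"] by (simp add: norm_smult_vec)
    moreover have "cmod l * norm v < norm v" using that v0 by simp
    ultimately show False by simp
  qed
  have "\<exists>a b. a \<noteq> 0 \<and> (\<forall>x\<in>\<Omega>. inner a x \<le> b) \<and> (\<forall>x\<in>{p+v}. inner a x \<ge> b)"
    by (rule separating_hyperplane_sets) (use cv p pv in auto)
  then obtain a b where ab: "a \<noteq> 0" "\<forall>x\<in>\<Omega>. inner a x \<le> b" "\<forall>x\<in>{p+v}. inner a x \<ge> b"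
    by blast
  have strict: "inner a x < b" if x: "x \<in> \<Omega>" for x
  proof -
    obtain e where e: "e > 0" "ball x e \<subseteq> \<Omega>" using op x by (meson open_contains_ball)
    define y where "y = x + (e / (2 * norm a)) *\<^sub>R a"
    have "dist x y < e" using e ab(1) by (simp add: y_def dist_norm)
    hence "y \<in> \<Omega>" using e by auto
    hence "inner a y \<le> b" using ab by blast
    moreover have "inner a y = inner a x + e / 2 * norm a"
      using ab(1) by (simp add: y_def inner_add_right power2_norm_eq_inner[symmetric] power2_eq_square)
    moreover have "e / 2 * norm a > 0" using e ab(1) by simp
    ultimately show ?thesis by linarith
  qed
  define cv where "cv = (\<chi> i. cnj (a$i))"
  have Rcv: "Re (cl cv x) = inner a x" for x unfolding cv_def by (rule Re_cl_inner)
  define \<alpha> where "\<alpha> = cl cv v"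
  define \<beta> where "\<beta> = Re (cl cv p)"
  have lt: "Re (l * \<alpha>) < b - \<beta>" if "cmod l < 1" for l
  proof -
    have "inner a (p + l *s v) < b" using strict D[OF that] by blast
    hence "Re (cl cv (p + l *s v)) < b" by (simp add: Rcv)
    thus ?thesis by (simp add: cl_add cl_scale \<alpha>_def \<beta>_def)
  qed
  have pos: "b - \<beta> > 0" using lt[of 0] by simp
  have ge: "\<beta> + Re \<alpha> \<ge> b"
  proof -
    have "inner a (p + v) \<ge> b" using ab(3) by simp
    hence "Re (cl cv (p + v)) \<ge> b" by (simp add: Rcv)
    thus ?thesis by (simp add: cl_add \<alpha>_def \<beta>_def)
  qed
  have le: "cmod \<alpha> \<le> b - \<beta>" using sup_trick lt by blast
  have "Re \<alpha> \<le> cmod \<alpha>" by (rule complex_Re_le_cmod)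
  hence eqs: "Re \<alpha> = b - \<beta>" "cmod \<alpha> = Re \<alpha>" using le ge by linarith+
  have "Im \<alpha> = 0"
  proof -
    have "cmod \<alpha> ^ 2 = Re \<alpha> ^ 2 + Im \<alpha> ^ 2" by (rule cmod_power2)
    thus ?thesis using eqs by simp
  qed
  hence \<alpha>r: "\<alpha> = of_real (b - \<beta>)" using eqs by (simp add: complex_eq_iff)
  define a' where "a' = (1 / \<alpha>) *s cv"
  have "cl a' v = 1" using pos by (simp add: a'_def cl_scale_left \<alpha>_def[symmetric] \<alpha>r)
  moreover have "Re (cl a' (z - p)) < 1" if z: "z \<in> \<Omega>" for z
  proof -
    have "Re (cl cv z) < b" using strict[OF z] by (simp add: Rcv)
    hence "(Re (cl cv z) - \<beta>) / (b - \<beta>) < 1" using pos by (simp add: divide_less_eq)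
    moreover have "cl a' (z - p) = of_real (1 / (b - \<beta>)) * (cl cv z - cl cv p)"
      by (simp add: a'_def cl_scale_left cl_diff \<alpha>r diff_divide_distrib)
    ultimately show ?thesis by (simp add: \<beta>_def diff_divide_distrib)
  qed
  moreover have "\<forall>k<m. cl (c k) v = 0" using vW by (simp add: W_def)
  ultimately show ?thesis using D by blast
qed



lemma construct:
  fixes \<Omega> :: "(complex^'n) set"
  assumes op: "open \<Omega>" and cv: "convex \<Omega>" and hyp: "kobayashi_hyperbolic \<Omega>" and p: "p \<in> \<Omega>"
  shows "\<exists>v c. \<forall>j<CARD('n). (\<forall>l. cmod l < 1 \<longrightarrow> p + l *s v j \<in> \<Omega>) \<and> (\<forall>z\<in>\<Omega>. Re (cl (c j) (z - p)) < 1)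
              \<and> cl (c j) (v j) = 1 \<and> (\<forall>k<j. cl (c k) (v j) = 0)"
proof -
  have "m \<le> CARD('n) \<Longrightarrow> \<exists>v c. \<forall>j<m. (\<forall>l. cmod l < 1 \<longrightarrow> p + l *s v j \<in> \<Omega>) \<and> (\<forall>z\<in>\<Omega>. Re (cl (c j) (z - p)) < 1)
              \<and> cl (c j) (v j) = 1 \<and> (\<forall>k<j. cl (c k) (v j) = 0)" for m
  proof (induction m)
    case 0
    show ?case by simp
  next
    case (Suc m)
    then obtain v c where vc: "\<forall>j<m. (\<forall>l. cmod l < 1 \<longrightarrow> p + l *s v j \<in> \<Omega>) \<and> (\<forall>z\<in>\<Omega>. Re (cl (c j) (z - p)) < 1)
              \<and> cl (c j) (v j) = 1 \<and> (\<forall>k<j. cl (c k) (v j) = 0)" by auto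
    have "m < CARD('n)" using Suc.prems by simp
    then obtain u where u: "u \<noteq> 0" "\<forall>k<m. cl (c k) u = 0" using kernel_nonzero by blast
    obtain v' a' where va: "\<forall>l. cmod l < 1 \<longrightarrow> p + l *s v' \<in> \<Omega>" "\<forall>z\<in>\<Omega>. Re (cl a' (z - p)) < 1"
       "cl a' v' = 1" "\<forall>k<m. cl (c k) v' = 0"
      using step[OF op cv hyp p u] by blast
    show ?case
      apply (rule exI[of _ "v(m := v')"], rule exI[of _ "c(m := a')"])
      using vc va by (auto simp: less_Suc_eq)
  qed
  thus ?thesis by simp
qed

lemma entry_bound:
  assumes "\<forall>l. cmod l < 1 \<longrightarrow> p + l *s w \<in> \<Omega>" "\<forall>z\<in>\<Omega>. Re (cl a (z - p)) < 1"
  shows "cmod (cl a w) \<le> 1"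
proof (rule sup_trick)
  fix l :: complex assume "cmod l < 1"
  hence "Re (cl a (p + l *s w - p)) < 1" using assms by blast
  thus "Re (l * cl a w) < 1" by (simp add: cl_scale)
qed

lemma sum_pow2_real: "(\<Sum>k<m. (2::real)^k) = 2^m - 1"
  by (induction m) auto

lemma fsub:
  fixes M :: "nat \<Rightarrow> nat \<Rightarrow> complex" and w :: "nat \<Rightarrow> complex"
  assumes Mb: "\<And>j k. j < n \<Longrightarrow> k < n \<Longrightarrow> cmod (M j k) \<le> 1" and Md: "\<And>j. j < n \<Longrightarrow> M j j = 1"
    and wb: "\<And>j. j < n \<Longrightarrow> cmod (w j) \<le> \<delta>"
  shows "m \<le> n \<Longrightarrow> \<exists>y. \<forall>j<m. (\<Sum>k\<le>j. M j k * y k) = w j \<and> cmod (y j) \<le> 2^j * \<delta>"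
proof (induction m)
  case 0 show ?case by simp
next
  case (Suc m)
  then obtain y where y: "\<forall>j<m. (\<Sum>k\<le>j. M j k * y k) = w j \<and> cmod (y j) \<le> 2^j * \<delta>" by auto
  have mn: "m < n" using Suc.prems by simp
  define y' where "y' = y(m := w m - (\<Sum>k<m. M m k * y k))"
  have eqm: "(\<Sum>k\<le>m. M m k * y' k) = w m"
  proof -
    have "(\<Sum>k\<le>m. M m k * y' k) = (\<Sum>k<m. M m k * y' k) + M m m * y' m"
      by (simp add: lessThan_Suc_atMost[symmetric])
    also have "(\<Sum>k<m. M m k * y' k) = (\<Sum>k<m. M m k * y k)" by (intro sum.cong) (auto simp: y'_def)
    finally show ?thesis using Md[OF mn] by (simp add: y'_def)
  qed
  have bm: "cmod (y' m) \<le> 2^m * \<delta>"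
  proof -
    have "cmod (y' m) \<le> cmod (w m) + cmod (\<Sum>k<m. M m k * y k)" by (simp add: y'_def norm_triangle_ineq4)
    also have "cmod (\<Sum>k<m. M m k * y k) \<le> (\<Sum>k<m. cmod (M m k * y k))" by (rule norm_sum)
    also have "\<dots> \<le> (\<Sum>k<m. 2^k * \<delta>)"
    proof (intro sum_mono)
      fix k assume "k \<in> {..<m}"
      hence k: "k < m" by simp
      have "cmod (M m k * y k) = cmod (M m k) * cmod (y k)" by (simp add: norm_mult)
      also have "\<dots> \<le> 1 * (2^k * \<delta>)" using Mb[OF mn, of k] k mn y by (intro mult_mono) auto
      finally show "cmod (M m k * y k) \<le> 2^k * \<delta>" by simp
    qed
    also have "(\<Sum>k<m. 2^k * \<delta>) = (2^m - 1) * \<delta>" by (simp add: sum_distrib_right[symmetric] sum_pow2_real)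
    finally show ?thesis using wb[OF mn] by (simp add: algebra_simps)
  qed
  show ?case
  proof (rule exI[of _ y'], intro allI impI)
    fix j assume "j < Suc m"
    show "(\<Sum>k\<le>j. M j k * y' k) = w j \<and> cmod (y' j) \<le> 2 ^ j * \<delta>"
    proof (cases "j = m")
      case True thus ?thesis using eqm bm by simp
    next
      case False
      hence jm: "j < m" using \<open>j < Suc m\<close> by simp
      have "(\<Sum>k\<le>j. M j k * y' k) = (\<Sum>k\<le>j. M j k * y k)" using jm by (intro sum.cong) (auto simp: y'_def)
      thus ?thesis using y jm by (simp add: y'_def)
    qed
  qed
qed

lemma vec_lambda_axis_sum: "(\<chi> i. a i) = (\<Sum>i\<in>UNIV. axis i (a i))"
  by (simp add: vec_eq_iff axis_def)

lemma bounded_linear_axis: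
  fixes i :: "'n::finite"
  shows "bounded_linear (\<lambda>c::complex. (axis i c :: complex^'n))"
proof (rule bounded_linear_intro[of _ 1])
  show "(axis i (x + y) :: complex^'n) = axis i x + axis i y" for x y :: complex by (simp add: vec_eq_iff axis_def)
  show "(axis i (r *\<^sub>R x) :: complex^'n) = r *\<^sub>R axis i x" for r and x :: complex by (simp add: vec_eq_iff axis_def)
  show "norm (axis i x :: complex^'n) \<le> norm x * 1" for x
    unfolding norm_vec_def axis_def L2_set_def
    by (simp add: if_distrib[of "\<lambda>t. (norm t)^2"] cong: if_cong)
qed

lemma has_derivative_vec_lambda':
  fixes \<phi> :: "'n::finite \<Rightarrow> 'a::real_normed_vector \<Rightarrow> complex"
  assumes "\<And>i. (\<phi> i has_derivative \<phi>' i) F"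
  shows "((\<lambda>x. (\<chi> i. \<phi> i x) :: complex^'n) has_derivative (\<lambda>v. \<chi> i. \<phi>' i v)) F"
proof -
  have "((\<lambda>x. \<Sum>i\<in>UNIV. axis i (\<phi> i x) :: complex^'n) has_derivative (\<lambda>v. \<Sum>i\<in>UNIV. axis i (\<phi>' i v))) F"
    by (intro has_derivative_sum bounded_linear.has_derivative[OF bounded_linear_axis] assms)
  thus ?thesis by (simp add: vec_lambda_axis_sum[symmetric])
qed



lemma bounded_linear_cl: "bounded_linear (cl c)"
  unfolding cl_def
  by (intro bounded_linear_sum bounded_linear_compose[OF bounded_linear_mult_right bounded_linear_vec_nth])

lemma cl_has_derivative: "((\<lambda>z. cl c (z - p)) has_derivative cl c) F"
proof -
  have "((\<lambda>z. cl c z - cl c p) has_derivative (\<lambda>v. cl c v - 0)) F"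
    by (intro has_derivative_diff has_derivative_const bounded_linear.has_derivative[OF bounded_linear_cl] has_derivative_ident)
  thus ?thesis by (simp add: cl_diff)
qed

lemma h_lt1: assumes "Re u < 1" shows "cmod (u / (2 - u)) < 1"
proof -
  have "cmod (2 - u)^2 - cmod u^2 = 4 - 4 * Re u" unfolding cmod_power2 by (simp add: power2_eq_square algebra_simps)
  hence "cmod u ^2 < cmod (2-u)^2" using assms by simp
  hence lt: "cmod u < cmod (2-u)" using power2_less_imp_less by fastforce
  hence "cmod (2-u) > 0" by (meson norm_ge_zero le_less_trans)
  thus ?thesis using lt by (simp add: norm_divide)
qed

lemma h_ne2: "Re u < 1 \<Longrightarrow> u \<noteq> 2" by auto

lemma h_inj: fixes u u' :: complex assumes "u \<noteq> 2" "u' \<noteq> 2" "u / (2 - u) = u' / (2 - u')" shows "u = u'"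
proof -
  have "2 - u \<noteq> 0" "2 - u' \<noteq> 0" using assms by auto
  hence "u * (2 - u') = u' * (2 - u)" using assms(3) by (simp add: field_simps)
  thus ?thesis by (simp add: algebra_simps)
qed

lemma h_inv: assumes "1 + t \<noteq> 0" shows "(2*t/(1+t)) / (2 - 2*t/(1+t)) = (t::complex)"
proof -
  have "2 - 2*t/(1+t) = 2 / (1+t)" using assms by (simp add: field_simps)
  moreover have "(2*t/(1+t)) / (2 / (1+t)) = t" using assms by (simp add: divide_simps)
  ultimately show ?thesis by simp
qed

lemma w_bound: assumes "cmod t \<le> 1/2" shows "cmod (2*t/(1+t)) \<le> 4 * cmod t"
proof -
  have "cmod (1 + t) \<ge> 1 - cmod t" using norm_triangle_ineq2[of 1 "-t"] by simp
  hence h: "cmod (1 + t) \<ge> 1/2" using assms by simp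
  have "cmod (2*t/(1+t)) = 2 * cmod t / cmod (1+t)" by (simp add: norm_divide norm_mult)
  also have "\<dots> \<le> 2 * cmod t / (1/2)" using h by (intro divide_left_mono) auto
  finally show ?thesis by simp
qed

lemma h_deriv: "u \<noteq> 2 \<Longrightarrow> ((\<lambda>u. u / (2 - u)) has_field_derivative 2 / (2 - u)^2) (at u)"
  by (auto intro!: derivative_eq_intros simp: field_simps power2_eq_square)

lemma scaleR_smult: "(r::real) *\<^sub>R ((a::complex) *s x) = (complex_of_real r * a) *s (x::complex^'n)"
  unfolding vec_eq_iff vector_scaleR_component vector_smult_component by (simp add: scaleR_conv_of_real)



lemma main_bound:
  fixes \<Omega> :: "(complex^'n) set"
  assumes op: "open \<Omega>" and cv: "convex \<Omega>" and hyp: "kobayashi_hyperbolic \<Omega>" and p: "p \<in> \<Omega>"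
  defines "N \<equiv> CARD('n)"
  defines "\<delta> \<equiv> 1 / (2 * real N * 2 ^ N)"
  shows "\<exists>f\<in>squeeze_maps p \<Omega>. ball 0 (\<delta> / (4 * sqrt (real N))) \<subseteq> f ` \<Omega>"
proof -
  have N1: "N \<ge> 1" unfolding N_def by (simp add: Suc_leI)
  have dpos: "\<delta> > 0" unfolding \<delta>_def using N1 by simp
  have dsmall: "real N * 2^N * \<delta> = 1/2" unfolding \<delta>_def using N1 by simp
  obtain v c where vc: "\<forall>j<N. (\<forall>l. cmod l < 1 \<longrightarrow> p + l *s v j \<in> \<Omega>) \<and> (\<forall>z\<in>\<Omega>. Re (cl (c j) (z - p)) < 1)
              \<and> cl (c j) (v j) = 1 \<and> (\<forall>k<j. cl (c k) (v j) = 0)"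
    using construct[OF op cv hyp p] unfolding N_def by blast
  obtain e :: "nat \<Rightarrow> 'n" where e: "bij_betw e {..<N} UNIV" using enum_exists unfolding N_def by blast
  define g where "g = inv_into {..<N} e"
  have ge: "g (e j) = j" if "j < N" for j
    using e that unfolding g_def by (simp add: bij_betw_def inv_into_f_f)
  have eg: "e (g i) = i" for i
    using e unfolding g_def by (auto simp: bij_betw_def f_inv_into_f)
  have gN: "g i < N" for i
  proof -
    have "i \<in> e ` {..<N}" using e by (simp add: bij_betw_def)
    hence "g i \<in> {..<N}" unfolding g_def by (rule inv_into_into)
    thus ?thesis by simp
  qed
  define F where "F = (\<lambda>x. \<chi> i. cl (c (g i)) x)"
  have Fadd: "F (x + y) = F x + F y" for x y by (simp add: F_def vec_eq_iff cl_add)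
  have Fsc: "F (a *s x) = a *s F x" for a x by (simp add: F_def vec_eq_iff cl_scale)
  have Fi: "F x $ i = cl (c (g i)) x" for x i by (simp add: F_def)
  define M where "M = (\<lambda>j k. cl (c j) (v k))"
  have vcj: "(\<forall>l. cmod l < 1 \<longrightarrow> p + l *s v j \<in> \<Omega>) \<and> (\<forall>z\<in>\<Omega>. Re (cl (c j) (z - p)) < 1)
              \<and> cl (c j) (v j) = 1 \<and> (\<forall>k<j. cl (c k) (v j) = 0)" if "j < N" for j
    by (rule vc[rule_format, OF that])
  have vD: "\<forall>l. cmod l < 1 \<longrightarrow> p + l *s v j \<in> \<Omega>" if "j < N" for j
    using vcj[OF that] by (rule conjunct1)
  have vH: "\<forall>z\<in>\<Omega>. Re (cl (c j) (z - p)) < 1" if "j < N" for j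
    using vcj[OF that] by (rule conjunct1[OF conjunct2])
  have v1: "cl (c j) (v j) = 1" if "j < N" for j
    using vcj[OF that] by (rule conjunct1[OF conjunct2[OF conjunct2]])
  have v0: "\<forall>k<j. cl (c k) (v j) = 0" if "j < N" for j
    using vcj[OF that] by (rule conjunct2[OF conjunct2[OF conjunct2]])
  have Mb: "cmod (M j k) \<le> 1" if "j < N" "k < N" for j k
    unfolding M_def by (rule entry_bound[OF vD[OF that(2)] vH[OF that(1)]])
  have Md: "M j j = 1" if "j < N" for j using v1[OF that] by (simp add: M_def)
  have Mz: "M j k = 0" if "j < k" "k < N" for j k using v0[OF that(2)] that(1) by (simp add: M_def)
  have solve: "\<exists>x. p + x \<in> \<Omega> \<and> F x = w" if wb: "\<And>i. cmod (w $ i) \<le> \<delta>" for w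
  proof -
    obtain y where y: "\<forall>j<N. (\<Sum>k\<le>j. M j k * y k) = w $ e j \<and> cmod (y j) \<le> 2^j * \<delta>"
      using fsub[of N M "\<lambda>j. w $ e j" \<delta> N] Mb Md wb by blast
    define x where "x = (\<Sum>k<N. y k *s v k)"
    have Fx: "F x = w"
    proof (subst vec_eq_iff, intro allI)
      fix i
      let ?j = "g i"
      have "F x $ i = (\<Sum>k<N. y k * M ?j k)" by (simp add: Fi x_def cl_sum cl_scale M_def)
      also have "\<dots> = (\<Sum>k\<le>?j. y k * M ?j k)"
        using gN[of i] Mz[of ?j] by (intro sum.mono_neutral_right) auto
      also have "\<dots> = w $ e ?j" using y gN[of i] by (simp add: mult.commute)
      finally show "F x $ i = w $ i" by (simp add: eg)
    qed
    define z where "z = (\<lambda>k. p + (of_nat N * y k) *s v k)"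
    have zin: "z k \<in> \<Omega>" if "k \<in> {..<N}" for k
    proof -
      have k: "k < N" using that by simp
      have "cmod (of_nat N * y k) = real N * cmod (y k)" by (simp add: norm_mult)
      also have "\<dots> \<le> real N * (2^N * \<delta>)"
      proof (intro mult_left_mono)
        have pk: "(2::real)^k \<le> 2^N" using k by (intro power_increasing) auto
        have "cmod (y k) \<le> 2^k * \<delta>" using y k by blast
        also have "\<dots> \<le> 2^N * \<delta>" using pk dpos by (intro mult_right_mono) auto
        finally show "cmod (y k) \<le> 2^N * \<delta>" .
      qed auto
      also have "\<dots> = 1/2" using dsmall by (simp add: mult.assoc)
      finally have "cmod (of_nat N * y k) \<le> 1/2" .
      hence "cmod (of_nat N * y k) < 1" by simp
      thus ?thesis using vD[OF k] unfolding z_def by blast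
    qed
    have "(\<Sum>k<N. (1 / real N) *\<^sub>R z k) \<in> \<Omega>"
      by (rule convex_sum[OF _ cv]) (use N1 zin in auto)
    moreover have "(\<Sum>k<N. (1 / real N) *\<^sub>R z k) = p + x"
    proof -
      have "(\<Sum>k<N. (1 / real N) *\<^sub>R z k) = (\<Sum>k<N. (1 / real N) *\<^sub>R p) + (\<Sum>k<N. y k *s v k)"
        unfolding z_def scaleR_add_right sum.distrib scaleR_smult using N1 by simp
      also have "(\<Sum>k<N. (1 / real N) *\<^sub>R p) = (\<Sum>k<N. 1 / real N) *\<^sub>R p" by (rule scaleR_sum_left[symmetric])
      also have "(\<Sum>k<N. 1 / real N) = 1" using N1 by simp
      finally show ?thesis by (simp add: x_def)
    qed
    ultimately show ?thesis using Fx by auto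
  qed
  have Fsurj: "surj F"
  proof -
    have "w \<in> range F" for w
    proof -
      define t where "t = \<delta> / (norm w + 1)"
      have nw: "norm w + 1 > 0" using norm_ge_zero[of w] by linarith
      hence tpos: "t > 0" using dpos by (simp add: t_def)
      have "cmod ((complex_of_real t *s w) $ i) \<le> \<delta>" for i
      proof -
        have "cmod ((complex_of_real t *s w) $ i) = t * cmod (w $ i)" using tpos by (simp add: norm_mult)
        also have "\<dots> \<le> t * (norm w + 1)" using tpos Finite_Cartesian_Product.norm_nth_le[of w i] by (intro mult_left_mono) auto
        also have "\<dots> = \<delta>" using nw by (simp add: t_def)
        finally show ?thesis .
      qed
      then obtain x where "F x = complex_of_real t *s w" using solve by blast
      hence "F ((1 / complex_of_real t) *s x) = w" using tpos by (simp add: Fsc vec_eq_iff)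
      thus ?thesis by (metis rangeI)
    qed
    thus ?thesis by blast
  qed
  have Finj: "inj F" using clin_surj_inj[OF Fadd Fsc Fsurj] .
  define s :: real where "s = 1 / sqrt (real N)"
  have spos: "s > 0" using N1 by (simp add: s_def)
  have s2: "s^2 = 1 / real N" using N1 by (simp add: s_def power_divide)
  define h where "h = (\<lambda>u::complex. u / (2 - u))"
  define f where "f = (\<lambda>z. \<chi> i. complex_of_real s * h (cl (c (g i)) (z - p)))"
  have Rlt: "Re (cl (c (g i)) (z - p)) < 1" if "z \<in> \<Omega>" for z i using vH[OF gN[of i]] that by blast
  have f0: "f p = 0" by (simp add: f_def h_def vec_eq_iff)
  have fball: "f ` \<Omega> \<subseteq> ball 0 1"
  proof
    fix y assume "y \<in> f ` \<Omega>"
    then obtain z where z: "z \<in> \<Omega>" "y = f z" by blast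
    have lt: "(cmod (y $ i))^2 < 1 / real N" for i
    proof -
      have hb: "cmod (h (cl (c (g i)) (z - p))) < 1" unfolding h_def using Rlt[OF z(1)] by (rule h_lt1)
      have "(cmod (y $ i))^2 = s^2 * (cmod (h (cl (c (g i)) (z - p))))^2"
        using spos by (simp add: z f_def norm_mult power_mult_distrib)
      also have "\<dots> < s^2 * 1" using hb spos by (intro mult_strict_left_mono) (auto simp: abs_square_less_1)
      finally show ?thesis using s2 by simp
    qed
    have "(\<Sum>i\<in>UNIV. (cmod (y $ i))^2) < (\<Sum>i\<in>(UNIV::'n set). 1 / real N)"
      by (rule sum_strict_mono) (auto simp: lt)
    also have "\<dots> = 1" using N1 by (simp add: N_def)
    finally have "(\<Sum>i\<in>UNIV. (cmod (y $ i))^2) < 1" .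
    hence "norm y < 1" unfolding norm_vec_def L2_set_def by simp
    thus "y \<in> ball 0 1" by simp
  qed
  have finj: "inj_on f \<Omega>"
  proof (rule inj_onI)
    fix z z' assume z: "z \<in> \<Omega>" "z' \<in> \<Omega>" "f z = f z'"
    have "F (z - p) $ i = F (z' - p) $ i" for i
    proof -
      have "complex_of_real s * h (cl (c (g i)) (z - p)) = complex_of_real s * h (cl (c (g i)) (z' - p))"
      proof -
        have "f z $ i = f z' $ i" using z(3) by simp
        thus ?thesis by (simp add: f_def)
      qed
      hence "h (cl (c (g i)) (z - p)) = h (cl (c (g i)) (z' - p))" using spos by simp
      hence "cl (c (g i)) (z - p) = cl (c (g i)) (z' - p)"
        unfolding h_def by (rule h_inj[OF h_ne2[OF Rlt[OF z(1)]] h_ne2[OF Rlt[OF z(2)]]])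
      thus ?thesis by (simp add: Fi)
    qed
    hence "F (z - p) = F (z' - p)" by (simp add: vec_eq_iff)
    hence "z - p = z' - p" using Finj by (simp add: inj_eq)
    thus "z = z'" by simp
  qed
  have fholo: "holo_map f \<Omega>"
    unfolding holo_map_def
  proof
    fix x assume x: "x \<in> \<Omega>"
    define L where "L = (\<lambda>w. \<chi> i. complex_of_real s * (2 / (2 - cl (c (g i)) (x - p))^2 * cl (c (g i)) w))"
    have "(f has_derivative L) (at x)"
      unfolding f_def L_def
    proof (rule has_derivative_vec_lambda')
      fix i
      have d1: "((\<lambda>z. cl (c (g i)) (z - p)) has_derivative cl (c (g i))) (at x)" by (rule cl_has_derivative)
      have d2: "(h has_derivative (*) (2 / (2 - cl (c (g i)) (x - p))^2)) (at (cl (c (g i)) (x - p)))"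
        unfolding h_def using h_deriv h_ne2 Rlt[OF x] by (intro has_field_derivative_imp_has_derivative) blast
      have "((\<lambda>z. h (cl (c (g i)) (z - p))) has_derivative (\<lambda>w. (2 / (2 - cl (c (g i)) (x - p))^2) * cl (c (g i)) w)) (at x)"
        using has_derivative_compose[OF d1 d2] .
      thus "((\<lambda>z. complex_of_real s * h (cl (c (g i)) (z - p))) has_derivative
             (\<lambda>w. complex_of_real s * (2 / (2 - cl (c (g i)) (x - p))^2 * cl (c (g i)) w))) (at x)"
        by (rule has_derivative_mult_right)
    qed
    moreover have "complex_linear_vec L"
      unfolding complex_linear_vec_def L_def by (simp add: vec_eq_iff cl_scale algebra_simps)
    ultimately show "\<exists>L. (f has_derivative L) (at x) \<and> complex_linear_vec L" by blast
  qed
  have fball2: "ball 0 (\<delta> / (4 * sqrt (real N))) \<subseteq> f ` \<Omega>"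
  proof
    fix y assume "y \<in> ball (0::complex^'n) (\<delta> / (4 * sqrt (real N)))"
    hence ny: "norm y < \<delta> / (4 * sqrt (real N))" by simp
    have sqN: "sqrt (real N) > 0" using N1 by simp
    define t where "t = (\<lambda>i. complex_of_real (sqrt (real N)) * y $ i)"
    have tb: "cmod (t i) < \<delta> / 4" for i
    proof -
      have "cmod (t i) = sqrt (real N) * cmod (y $ i)" by (simp add: t_def norm_mult)
      also have "\<dots> \<le> sqrt (real N) * norm y" using Finite_Cartesian_Product.norm_nth_le[of y i] sqN by simp
      also have "\<dots> < sqrt (real N) * (\<delta> / (4 * sqrt (real N)))" by (rule mult_strict_left_mono[OF ny sqN])
      also have "\<dots> = \<delta> / 4" using sqN by simp
      finally show ?thesis .
    qed
    have d14: "\<delta> \<le> 1/2"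
    proof -
      have "(1::real) * 1 \<le> real N * 2^N" using N1 by (intro mult_mono) auto
      hence "real N * 2^N \<ge> 1" by simp
      hence "\<delta> * 1 \<le> \<delta> * (real N * 2^N)" using dpos by (intro mult_left_mono) auto
      thus ?thesis using dsmall by (simp add: mult.commute mult.left_commute)
    qed
    have tb2: "cmod (t i) \<le> 1/2" for i using tb[of i] d14 by simp
    define w where "w = (\<chi> i. 2 * t i / (1 + t i))"
    have wb: "cmod (w $ i) \<le> \<delta>" for i
      using w_bound[OF tb2[of i]] tb[of i] by (simp add: w_def)
    obtain x where x: "p + x \<in> \<Omega>" "F x = w" using solve wb by blast
    have t1: "1 + t i \<noteq> 0" for i
    proof
      assume "1 + t i = 0"
      hence "t i = -1" by (simp add: add_eq_0_iff)
      thus False using tb2[of i] by simp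
    qed
    have "f (p + x) = y"
    proof (subst vec_eq_iff, intro allI)
      fix i
      have "F x $ i = w $ i" using x(2) by simp
      hence "cl (c (g i)) x = w $ i" by (simp add: Fi)
      hence "f (p + x) $ i = complex_of_real s * h (2 * t i / (1 + t i))" by (simp add: f_def w_def)
      also have "\<dots> = complex_of_real s * t i" unfolding h_def using h_inv[OF t1[of i]] by simp
      also have "\<dots> = y $ i" using sqN by (simp add: s_def t_def)
      finally show "f (p + x) $ i = y $ i" .
    qed
    thus "y \<in> f ` \<Omega>" using x(1) by (metis imageI)
  qed
  have "f \<in> squeeze_maps p \<Omega>" unfolding squeeze_maps_def using fholo finj fball f0 by blast
  thus ?thesis using fball2 by blast
qed



theorem theorem2p1:
  fixes \<Omega> :: "(complex^'n) set"
  assumes "domain \<Omega>" and "convex \<Omega>" and "kobayashi_hyperbolic \<Omega>"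
  shows "HHR \<Omega>"
proof -
  have op: "open \<Omega>" and ne: "\<Omega> \<noteq> {}" using assms(1) by (auto simp: domain_def)
  define N where "N = CARD('n)"
  define r where "r = (1 / (2 * real N * 2 ^ N)) / (4 * sqrt (real N))"
  have N1: "N \<ge> 1" unfolding N_def by (simp add: Suc_leI)
  have rpos: "r > 0" unfolding r_def using N1 by simp
  have sf: "squeezing_function \<Omega> p \<ge> r" if p: "p \<in> \<Omega>" for p
  proof -
    let ?S = "{r. r > 0 \<and> (\<exists>f\<in>squeeze_maps p \<Omega>. ball 0 r \<subseteq> f ` \<Omega>)}"
    have "\<exists>f\<in>squeeze_maps p \<Omega>. ball 0 r \<subseteq> f ` \<Omega>"
      using main_bound[OF op assms(2) assms(3) p] unfolding r_def N_def .
    hence rS: "r \<in> ?S" using rpos by blast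
    have bdd: "bdd_above ?S"
    proof (rule bdd_aboveI[of _ 1])
      fix r' assume "r' \<in> ?S"
      then obtain f where f: "f \<in> squeeze_maps p \<Omega>" "ball 0 r' \<subseteq> f ` \<Omega>" by blast
      show "r' \<le> 1"
      proof (rule ccontr)
        assume "\<not> r' \<le> 1"
        obtain x :: "complex^'n" where x: "norm x = 1" using vector_choose_size[of 1] by auto
        have "x \<in> ball 0 r'" using x \<open>\<not> r' \<le> 1\<close> by simp
        hence "x \<in> ball 0 1" using f unfolding squeeze_maps_def by blast
        thus False using x by simp
      qed
    qed
    show ?thesis unfolding squeezing_function_def by (rule cSup_upper[OF rS bdd])
  qed
  have "r \<le> squeezing_constant \<Omega>"
    unfolding squeezing_constant_def using ne sf by (intro cInf_greatest) auto
  thus ?thesis unfolding HHR_def using rpos by simp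
qed

end
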